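(* Let $G$ be a graph (without multiple edges) on the node set $\{1,\dots,N\}$, where $N=n_1+n_2$ with $n_1,n_2\ge 2$ and $N\ge 4$, and assign to each edge $(i,j)\in G$ a fixed real weight $w_{ij}$ (not depending on the labels). Let the labels $(g_1,\dots,g_N)\in\{0,1\}^N$ be drawn uniformly at random among all binary vectors with exactly $n_1$ zeros and $n_2$ ones (the permutation null distribution), and set $R_1^w=\sum_{(i,j)\in G} w_{ij}\,I(g_i=g_j=0)$, $R_2^w=\sum_{(i,j)\in G} w_{ij}\,I(g_i=g_j=1)$. Let $\mu_k^w=\mathbf{E}(R_k^w)$ and let $\Sigma^w$ be the $2\times 2$ covariance matrix of $(R_1^w,R_2^w)$ under this distribution, assumed invertible, and define $$S_R=(R_1^w-\mu_1^w,\;R_2^w-\mu_2^w)\,(\Sigma^w)^{-1}\begin{pmatrix}R_1^w-\mu_1^w\\ R_2^w-\mu_2^w\end{pmatrix}.$$ Let $p=\frac{n_1-1}{N-2}$, $q=1-p$, and $$Z^R_{\mathrm{diff}}=\frac{(R_1^w-R_2^w)-\mathbf{E}(R_1^w-R_2^w)}{\sqrt{\mathbf{Var}(R_1^w-R_2^w)}},\qquad Z^R_w=\frac{(qR_1^w+pR_2^w)-\mathbf{E}(qR_1^w+pR_2^w)}{\sqrt{\mathbf{Var}(qR_1^w+pR_2^w)}},$$ all moments taken under the permutation null distribution. Then $$S_R=(Z^R_{\mathrm{diff}})^2+(Z^R_w)^2\quad\text{and}\quad \mathbf{Cov}(Z^R_{\mathrm{diff}},Z^R_w)=0 .$$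
   Context: This is the setting of graph-based two-sample tests: the $N$ nodes correspond to the pooled observations of two samples of sizes $n_1$ and $n_2$, $g_i=0$ meaning node $i$ belongs to the first sample and $g_i=1$ to the second. $R_1^w$ and $R_2^w$ are the weighted within-sample edge counts of the first and second samples. Edges are unordered pairs, each counted once in the sums. *)

theory Defs
  imports "HOL-Analysis.Analysis"
begin

definition labelings :: "nat \<Rightarrow> nat \<Rightarrow> (nat \<Rightarrow> nat) set" where
  "labelings n1 n2 = {g \<in> {1..n1+n2} \<rightarrow>\<^sub>E {0,1}. card {i\<in>{1..n1+n2}. g i = 0} = n1}"

definition Ex :: "'a set \<Rightarrow> ('a \<Rightarrow> real) \<Rightarrow> real" where
  "Ex L f = (\<Sum>x\<in>L. f x) / real (card L)"

definition Var :: "'a set \<Rightarrow> ('a \<Rightarrow> real) \<Rightarrow> real" where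
  "Var L f = Ex L (\<lambda>x. (f x - Ex L f)^2)"

definition Cov :: "'a set \<Rightarrow> ('a \<Rightarrow> real) \<Rightarrow> ('a \<Rightarrow> real) \<Rightarrow> real" where
  "Cov L f h = Ex L (\<lambda>x. (f x - Ex L f) * (h x - Ex L h))"

text \<open>Weighted within-sample edge count for label k (edges are 2-element node sets,
  each counted once).\<close>
definition Rw :: "nat set set \<Rightarrow> (nat set \<Rightarrow> real) \<Rightarrow> nat \<Rightarrow> (nat \<Rightarrow> nat) \<Rightarrow> real" where
  "Rw E w k g = (\<Sum>e\<in>E. w e * of_bool (\<forall>i\<in>e. g i = k))"

end

theory Submission
  imports Defs
begin


lemma Ex_add: "Ex L (\<lambda>x. f x + h x) = Ex L f + Ex L h"
  by (simp add: Ex_def sum.distrib add_divide_distrib)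
lemma Ex_cmult: "Ex L (\<lambda>x. c * f x) = c * Ex L f"
  by (simp add: Ex_def sum_distrib_left)
lemma Ex_sum: "Ex L (\<lambda>x. \<Sum>i\<in>I. f i x) = (\<Sum>i\<in>I. Ex L (f i))"
  by (simp add: Ex_def sum.swap[of _ I] sum_divide_distrib)
lemma Ex_const: "finite L \<Longrightarrow> L \<noteq> {} \<Longrightarrow> Ex L (\<lambda>x. c) = c"
  by (simp add: Ex_def)
lemma Ex_cong: "(\<And>x. x \<in> L \<Longrightarrow> f x = h x) \<Longrightarrow> Ex L f = Ex L h"
  by (simp add: Ex_def)
lemma Cov_cong: "(\<And>x. x \<in> L \<Longrightarrow> f x = f' x) \<Longrightarrow> (\<And>x. x \<in> L \<Longrightarrow> h x = h' x)
   \<Longrightarrow> Cov L f h = Cov L f' h'"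
  unfolding Cov_def by (rule Ex_cong) (simp add: Ex_cong[of L f f'] Ex_cong[of L h h'])

lemma Cov_alt:
  assumes "finite L" "L \<noteq> {}"
  shows "Cov L f h = Ex L (\<lambda>x. f x * h x) - Ex L f * Ex L h"
proof -
  have "Cov L f h = Ex L (\<lambda>x. f x * h x + (- Ex L h) * f x + ((- Ex L f) * h x + Ex L f * Ex L h))"
    unfolding Cov_def by (rule Ex_cong) (simp add: algebra_simps)
  also have "\<dots> = Ex L (\<lambda>x. f x * h x) - Ex L f * Ex L h"
    by (simp only: Ex_add Ex_cmult Ex_const[OF assms]) simp
  finally show ?thesis .
qed

lemma Var_Cov: "Var L f = Cov L f f"
  by (simp add: Var_def Cov_def power2_eq_square)

lemma Cov_comm: "Cov L f h = Cov L h f"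
  by (simp add: Cov_def mult.commute)

lemma Cov_lin:
  assumes "finite L" "L \<noteq> {}"
  shows "Cov L (\<lambda>x. a1 * f1 x + b1 * f2 x + c1) (\<lambda>x. a2 * h1 x + b2 * h2 x + c2)
    = a1*a2 * Cov L f1 h1 + a1*b2 * Cov L f1 h2 + b1*a2 * Cov L f2 h1 + b1*b2 * Cov L f2 h2"
proof -
  have e: "Ex L (\<lambda>x. a * f x + b * g x + c) = a * Ex L f + b * Ex L g + c" for a b c f g
    by (simp only: Ex_add Ex_cmult Ex_const[OF assms])
  have m: "Ex L (\<lambda>x. a * f x + b * g x + c * h x + d * k x) = a * Ex L f + b * Ex L g + c * Ex L h + d * Ex L k" for a b c d f g h k
    by (simp only: Ex_add Ex_cmult)
  show ?thesis
    unfolding Cov_def e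
    apply (subst Ex_cong[where h="\<lambda>x. (a1*a2) * ((f1 x - Ex L f1)*(h1 x - Ex L h1))
       + (a1*b2) * ((f1 x - Ex L f1)*(h2 x - Ex L h2)) + (b1*a2) * ((f2 x - Ex L f2)*(h1 x - Ex L h1))
       + (b1*b2) * ((f2 x - Ex L f2)*(h2 x - Ex L h2))"])
     apply (simp add: algebra_simps)
    apply (simp only: m)
    done
qed

lemma Cov_sum2:
  assumes "finite L" "L \<noteq> {}"
  shows "Cov L f (\<lambda>x. \<Sum>i\<in>I. c i * h i x) = (\<Sum>i\<in>I. c i * Cov L f (h i))"
  using assms by (simp add: Cov_alt Ex_sum Ex_cmult sum_distrib_left sum_distrib_right
      algebra_simps sum_subtractf flip: Ex_cmult)

lemma Cov_sum2':
  assumes "finite L" "L \<noteq> {}"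
  shows "Cov L f (\<lambda>x. \<Sum>i\<in>I. h i x) = (\<Sum>i\<in>I. Cov L f (h i))"
  using Cov_sum2[OF assms, where c="\<lambda>_. 1"] by simp

lemma Cov_sum1':
  assumes "finite L" "L \<noteq> {}"
  shows "Cov L (\<lambda>x. \<Sum>i\<in>I. h i x) f = (\<Sum>i\<in>I. Cov L (h i) f)"
  using Cov_sum2'[OF assms] by (simp add: Cov_comm)

lemma Cov_sum1:
  assumes "finite L" "L \<noteq> {}"
  shows "Cov L (\<lambda>x. \<Sum>i\<in>I. c i * h i x) f = (\<Sum>i\<in>I. c i * Cov L (h i) f)"
  using Cov_sum2[OF assms] by (simp add: Cov_comm)



definition sw :: "nat \<Rightarrow> nat \<Rightarrow> nat \<Rightarrow> nat" where
  "sw a b i = (if i = a then b else if i = b then a else i)"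
definition X :: "nat \<Rightarrow> (nat \<Rightarrow> nat) \<Rightarrow> real" where
  "X i g = of_bool (g i = 0)"

lemma sw_sw[simp]: "sw a b (sw a b i) = i"
  by (simp add: sw_def)

lemma inj_sw: "inj (sw a b)"
  by (metis injI sw_sw)

lemma L_swap:
  assumes "a \<in> {1..n1+n2}" "b \<in> {1..n1+n2}" "g \<in> labelings n1 n2"
  shows "g \<circ> sw a b \<in> labelings n1 n2"
proof -
  let ?V = "{1..n1+n2}"
  have g: "g \<in> ?V \<rightarrow>\<^sub>E {0,1}" "card {i\<in>?V. g i = 0} = n1"
    using assms(3) by (simp_all add: labelings_def)
  have sV: "i \<in> ?V \<longleftrightarrow> sw a b i \<in> ?V" for i
    using assms(1,2) by (auto simp: sw_def)
  have "g \<circ> sw a b \<in> ?V \<rightarrow>\<^sub>E {0,1}"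
  proof -
    have "i \<notin> ?V \<Longrightarrow> sw a b i = i" for i using assms(1,2) by (auto simp: sw_def)
    note fix_out = this
    have "\<forall>i\<in>?V. (g \<circ> sw a b) i \<in> {0,1}"
    proof
      fix i assume "i \<in> ?V"
      then have "sw a b i \<in> ?V" using sV by blast
      then show "(g \<circ> sw a b) i \<in> {0,1}" using g(1) by (auto simp: PiE_iff)
    qed
    moreover have "g \<circ> sw a b \<in> extensional ?V"
      unfolding extensional_def
    proof (intro CollectI allI impI)
      fix i assume "i \<notin> ?V"
      then show "(g \<circ> sw a b) i = undefined"
        using fix_out[of i] g(1) by (auto simp: PiE_iff extensional_def)
    qed
    ultimately show ?thesis by (simp add: PiE_iff)
  qed
  moreover have "{i\<in>?V. (g \<circ> sw a b) i = 0} = sw a b ` {i\<in>?V. g i = 0}"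
  proof (rule set_eqI)
    fix i
    show "i \<in> {i\<in>?V. (g \<circ> sw a b) i = 0} \<longleftrightarrow> i \<in> sw a b ` {i\<in>?V. g i = 0}"
    proof
      assume "i \<in> {i\<in>?V. (g \<circ> sw a b) i = 0}"
      then have "sw a b i \<in> {i\<in>?V. g i = 0}" using sV[of i] by auto
      then show "i \<in> sw a b ` {i\<in>?V. g i = 0}" using sw_sw[of a b i] by (metis image_eqI)
    next
      assume "i \<in> sw a b ` {i\<in>?V. g i = 0}"
      then obtain j where j: "j \<in> ?V" "g j = 0" "i = sw a b j" by blast
      then have "sw a b i = j" by simp
      then show "i \<in> {i\<in>?V. (g \<circ> sw a b) i = 0}" using j sV[of i] by auto
    qed
  qed
  moreover have "card (sw a b ` {i\<in>?V. g i = 0}) = n1"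
    using g(2) card_image[OF inj_on_subset[OF inj_sw subset_UNIV]] by simp
  ultimately show ?thesis by (simp add: labelings_def)
qed

lemma finite_L: "finite (labelings n1 n2)"
proof -
  have "labelings n1 n2 \<subseteq> {1..n1+n2} \<rightarrow>\<^sub>E {0,1}" by (auto simp: labelings_def)
  then show ?thesis by (rule finite_subset) (simp add: finite_PiE)
qed

lemma L_ne: "labelings n1 n2 \<noteq> {}"
proof -
  define g0 where "g0 = (\<lambda>i. if i \<in> {1..n1+n2} then (if i \<le> n1 then 0 else 1::nat) else undefined)"
  have "{i\<in>{1..n1+n2}. g0 i = 0} = {1..n1}" by (auto simp: g0_def)
  moreover have "g0 \<in> {1..n1+n2} \<rightarrow>\<^sub>E {0,1}" by (auto simp: g0_def PiE_iff extensional_def)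
  ultimately have "g0 \<in> labelings n1 n2" unfolding labelings_def by simp
  then show ?thesis by blast
qed

lemma Ex_swap:
  assumes "a \<in> {1..n1+n2}" "b \<in> {1..n1+n2}"
  shows "Ex (labelings n1 n2) f = Ex (labelings n1 n2) (\<lambda>g. f (g \<circ> sw a b))"
proof -
  have "(\<Sum>g\<in>labelings n1 n2. f (g \<circ> sw a b)) = (\<Sum>g\<in>labelings n1 n2. f g)"
    by (rule sum.reindex_bij_witness[where i="\<lambda>g. g \<circ> sw a b" and j="\<lambda>g. g \<circ> sw a b"])
       (auto simp: o_def intro!: L_swap[OF assms, unfolded comp_def])
  then show ?thesis by (simp add: Ex_def)
qed

lemma sumX:
  assumes "g \<in> labelings n1 n2"
  shows "(\<Sum>i\<in>{1..n1+n2}. X i g) = real n1"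
proof -
  have "(\<Sum>i\<in>{1..n1+n2}. X i g) = real (card ({1..n1+n2} \<inter> {i. g i = 0}))"
    unfolding X_def by (intro sum_of_bool_eq finite_atLeastAtMost)
  also have "{1..n1+n2} \<inter> {i. g i = 0} = {i\<in>{1..n1+n2}. g i = 0}" by blast
  also have "card {i\<in>{1..n1+n2}. g i = 0} = n1" using assms unfolding labelings_def by blast
  finally show ?thesis .
qed

lemma const_sum:
  assumes "finite S" "k0 \<in> S" "\<And>k. k \<in> S \<Longrightarrow> F k = F k0" "(\<Sum>k\<in>S. F k) = T"
  shows "real (card S) * F k0 = T"
proof -
  have "(\<Sum>k\<in>S. F k) = (\<Sum>k\<in>S. F k0)" by (rule sum.cong[OF refl]) (rule assms(3))
  then show ?thesis using assms(4) by simp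
qed



lemma XX: "X i g * X i g = X i g" by (auto simp: X_def)

lemma X_sw1: "X a (g \<circ> sw a b) = X b g" by (simp add: X_def sw_def)
lemma X_sw2: "X b (g \<circ> sw a b) = X a g" by (simp add: X_def sw_def)
lemma X_sw3: "c \<noteq> a \<Longrightarrow> c \<noteq> b \<Longrightarrow> X c (g \<circ> sw a b) = X c g" by (simp add: X_def sw_def)

lemma solve_lin: "(c::real) \<noteq> 0 \<Longrightarrow> c * E = R \<Longrightarrow> E = R / c"
  by (simp add: field_simps)

lemma E1:
  assumes "i \<in> {1..n1+n2}" "n1 + n2 > 0"
  shows "Ex (labelings n1 n2) (X i) = real n1 / real (n1+n2)"
proof -
  let ?L = "labelings n1 n2" and ?V = "{1..n1+n2}"
  have "real (card ?V) * Ex ?L (X i) = real n1"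
  proof (rule const_sum[where F="\<lambda>k. Ex ?L (X k)"])
    fix k assume k: "k \<in> ?V"
    show "Ex ?L (X k) = Ex ?L (X i)"
      using Ex_swap[OF k assms(1), of "X k"] by (simp add: X_sw1)
  next
    have "(\<Sum>k\<in>?V. Ex ?L (X k)) = Ex ?L (\<lambda>g. \<Sum>k\<in>?V. X k g)" by (simp add: Ex_sum)
    also have "\<dots> = Ex ?L (\<lambda>g. real n1)" by (intro Ex_cong sumX)
    also have "\<dots> = real n1" by (simp add: Ex_const finite_L L_ne)
    finally show "(\<Sum>k\<in>?V. Ex ?L (X k)) = real n1" .
  qed (use assms in auto)
  then have "real (n1+n2) * Ex ?L (X i) = real n1" by simp
  moreover have "real (n1+n2) \<noteq> 0" using assms(2) by (simp only: of_nat_eq_0_iff)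
  ultimately show ?thesis by (intro solve_lin)
qed

lemma E2:
  assumes "i \<in> {1..n1+n2}" "j \<in> {1..n1+n2}" "i \<noteq> j" 
  shows "Ex (labelings n1 n2) (\<lambda>g. X i g * X j g) = real n1 / real (n1+n2) * (real n1 - 1) / (real (n1+n2) - 1)"
proof -
  let ?L = "labelings n1 n2" and ?V = "{1..n1+n2}"
  have N: "n1 + n2 \<ge> 2" using assms by auto
  have "real (card (?V - {i})) * Ex ?L (\<lambda>g. X i g * X j g) = (real n1 - 1) * Ex ?L (X i)"
  proof (rule const_sum[where F="\<lambda>k. Ex ?L (\<lambda>g. X i g * X k g)"])
    fix k assume k: "k \<in> ?V - {i}"
    show "Ex ?L (\<lambda>g. X i g * X k g) = Ex ?L (\<lambda>g. X i g * X j g)"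
      using Ex_swap[of k n1 n2 j "\<lambda>g. X i g * X k g"] k assms by (simp add: X_sw1 X_sw3)
  next
    have "(\<Sum>k\<in>?V - {i}. Ex ?L (\<lambda>g. X i g * X k g)) = Ex ?L (\<lambda>g. \<Sum>k\<in>?V - {i}. X i g * X k g)"
      by (simp add: Ex_sum)
    also have "\<dots> = Ex ?L (\<lambda>g. (real n1 - 1) * X i g)"
    proof (rule Ex_cong)
      fix g assume g: "g \<in> ?L"
      have "(\<Sum>k\<in>?V - {i}. X i g * X k g) = X i g * (\<Sum>k\<in>?V - {i}. X k g)"
        by (simp add: sum_distrib_left)
      also have "\<dots> = X i g * (real n1 - X i g)"
        using sumX[OF g] assms(1) by (simp add: sum_diff1)
      also have "\<dots> = (real n1 - 1) * X i g" by (simp add: algebra_simps XX)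
      finally show "(\<Sum>k\<in>?V - {i}. X i g * X k g) = (real n1 - 1) * X i g" .
    qed
    also have "\<dots> = (real n1 - 1) * Ex ?L (X i)" by (simp add: Ex_cmult)
    finally show "(\<Sum>k\<in>?V - {i}. Ex ?L (\<lambda>g. X i g * X k g)) = (real n1 - 1) * Ex ?L (X i)" .
  qed (use assms in auto)
  moreover have "card (?V - {i}) = n1 + n2 - 1" using assms(1) by simp
  moreover have "Ex ?L (X i) = real n1 / real (n1+n2)" by (intro E1) (use assms in auto)
  ultimately have "(real (n1+n2) - 1) * Ex ?L (\<lambda>g. X i g * X j g) = (real n1 - 1) * (real n1 / real (n1+n2))"
    using N by (simp add: of_nat_diff)
  then have "Ex ?L (\<lambda>g. X i g * X j g) = (real n1 - 1) * (real n1 / real (n1+n2)) / (real (n1+n2) - 1)"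
    by (rule solve_lin[rotated]) (use N in simp)
  then show ?thesis by simp
qed

lemma E3:
  assumes "i \<in> {1..n1+n2}" "j \<in> {1..n1+n2}" "k \<in> {1..n1+n2}" "i \<noteq> j" "k \<noteq> i" "k \<noteq> j"
  shows "Ex (labelings n1 n2) (\<lambda>g. X i g * X j g * X k g) =
     real n1 / real (n1+n2) * (real n1 - 1) / (real (n1+n2) - 1) * (real n1 - 2) / (real (n1+n2) - 2)"
proof -
  let ?L = "labelings n1 n2" and ?V = "{1..n1+n2}"
  have N: "n1 + n2 \<ge> 3"
  proof -
    have "{i,j,k} \<subseteq> ?V" using assms by auto
    then have "card {i,j,k} \<le> card ?V" by (intro card_mono) auto
    then show ?thesis using assms by simp
  qed
  have "real (card (?V - {i,j})) * Ex ?L (\<lambda>g. X i g * X j g * X k g) = (real n1 - 2) * Ex ?L (\<lambda>g. X i g * X j g)"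
  proof (rule const_sum[where F="\<lambda>k. Ex ?L (\<lambda>g. X i g * X j g * X k g)"])
    fix l assume l: "l \<in> ?V - {i,j}"
    show "Ex ?L (\<lambda>g. X i g * X j g * X l g) = Ex ?L (\<lambda>g. X i g * X j g * X k g)"
      using Ex_swap[of l n1 n2 k "\<lambda>g. X i g * X j g * X l g"] l assms by (simp add: X_sw1 X_sw3)
  next
    have "(\<Sum>l\<in>?V - {i,j}. Ex ?L (\<lambda>g. X i g * X j g * X l g)) = Ex ?L (\<lambda>g. \<Sum>l\<in>?V - {i,j}. X i g * X j g * X l g)"
      by (simp add: Ex_sum)
    also have "\<dots> = Ex ?L (\<lambda>g. (real n1 - 2) * (X i g * X j g))"
    proof (rule Ex_cong)
      fix g assume g: "g \<in> ?L"
      have "(\<Sum>l\<in>?V - {i,j}. X i g * X j g * X l g) = X i g * X j g * (\<Sum>l\<in>?V - {i,j}. X l g)"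
        by (simp add: sum_distrib_left)
      also have "(\<Sum>l\<in>?V - {i,j}. X l g) = real n1 - X i g - X j g"
        using sumX[OF g] assms by (simp add: sum_diff)
      also have "X i g * X j g * (real n1 - X i g - X j g) = (real n1 - 2) * (X i g * X j g)"
        by (auto simp: X_def)
      finally show "(\<Sum>l\<in>?V - {i,j}. X i g * X j g * X l g) = (real n1 - 2) * (X i g * X j g)" .
    qed
    also have "\<dots> = (real n1 - 2) * Ex ?L (\<lambda>g. X i g * X j g)" by (simp add: Ex_cmult)
    finally show "(\<Sum>l\<in>?V - {i,j}. Ex ?L (\<lambda>g. X i g * X j g * X l g)) = (real n1 - 2) * Ex ?L (\<lambda>g. X i g * X j g)" .
  qed (use assms in auto)
  moreover have "card (?V - {i,j}) = n1 + n2 - 2" using assms by (simp add: card_Diff_subset)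
  moreover note E2[OF assms(1,2,4)]
  ultimately have "(real (n1+n2) - 2) * Ex ?L (\<lambda>g. X i g * X j g * X k g) =
     (real n1 - 2) * (real n1 / real (n1+n2) * (real n1 - 1) / (real (n1+n2) - 1))"
    using N by (simp add: of_nat_diff)
  then have "Ex ?L (\<lambda>g. X i g * X j g * X k g) = (real n1 - 2) * (real n1 / real (n1+n2) * (real n1 - 1) / (real (n1+n2) - 1)) / (real (n1+n2) - 2)"
    by (rule solve_lin[rotated]) (use N in simp)
  then show ?thesis by simp
qed



lemma A1:
  fixes n M M1 M2 :: real assumes "M \<noteq> 0" "M1 \<noteq> 0" "M2 \<noteq> 0" "M1 = M - 1" "M2 = M - 2"
  shows "n/M*(n-1)/M1 - n/M*(n/M*(n-1)/M1) = (n-1)/M2*((n/M - n/M*(n/M)) + (n/M*(n-1)/M1 - n/M*(n/M)))"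
  apply (simp add: field_simps assms(1-3))
  apply (simp only: assms(4,5))
  apply algebra
  done

lemma A3:
  fixes n M M1 M2 :: real assumes "M \<noteq> 0" "M1 \<noteq> 0" "M2 \<noteq> 0" "M1 = M - 1" "M2 = M - 2"
  shows "n/M*(n-1)/M1*(n-2)/M2 - n/M*(n/M*(n-1)/M1) = (n-1)/M2*((n/M*(n-1)/M1 - n/M*(n/M)) + (n/M*(n-1)/M1 - n/M*(n/M)))"
  apply (simp add: field_simps assms(1-3))
  apply (simp only: assms(4,5))
  apply algebra
  done

lemma final_alg:
  fixes V1 V2 C a b y1 y2 p q VU VW :: real
  assumes "V1*y1 + C*y2 = a" "C*y1 + V2*y2 = b" "q = 1 - p"
    "q*V1 + p*C - q*C - p*V2 = 0" "VU = V1 - 2*C + V2" "VW = q*q*V1 + 2*p*q*C + p*p*V2"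
    "VU \<noteq> 0" "VW \<noteq> 0"
  shows "a*y1+b*y2 = (a-b)^2/VU + (q*a+p*b)^2/VW"
proof -
  have s1: "(a*y1+b*y2)*(V1*V2-C*C) = V2*a^2-2*C*a*b+V1*b^2"
    unfolding assms(1,2)[symmetric] by algebra
  have s2: "VU*VW = V1*V2-C*C" using assms(3-6) by algebra
  have s3: "(a-b)^2*VW + (q*a+p*b)^2*VU = V2*a^2-2*C*a*b+V1*b^2" using assms(3-6) by algebra
  have "(a*y1+b*y2) * (VU*VW) = (a-b)^2*VW + (q*a+p*b)^2*VU"
    using s1 s2 s3 by simp
  then show ?thesis using assms(7,8) by (simp add: field_simps)
qed

lemma det_alg:
  fixes V1 V2 C p q VU VW :: real
  assumes "q = 1 - p"
    "q*V1 + p*C - q*C - p*V2 = 0" "VU = V1 - 2*C + V2" "VW = q*q*V1 + 2*p*q*C + p*p*V2"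
  shows "VU * VW = V1*V2 - C*C"
  using assms by algebra


lemma K:
  assumes "n1 \<ge> 2" "n2 \<ge> 2" "k \<in> {1..n1+n2}" "i \<in> {1..n1+n2}" "j \<in> {1..n1+n2}" "i \<noteq> j"
  shows "Cov (labelings n1 n2) (X k) (\<lambda>g. X i g * X j g)
     = real (n1-1) / real (n1+n2-2) * (Cov (labelings n1 n2) (X k) (X i) + Cov (labelings n1 n2) (X k) (X j))"
proof -
  let ?L = "labelings n1 n2" and ?V = "{1..n1+n2}"
  let ?n = "real n1" and ?M = "real (n1+n2)"
  have p: "real (n1-1) / real (n1+n2-2) = (?n - 1) / (?M - 2)"
    using assms(1,2) by (simp add: of_nat_diff)
  have nz: "?M \<noteq> 0" "?M - 1 \<noteq> 0" "?M - 2 \<noteq> 0" using assms(1,2) by auto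
  note CA = Cov_alt[OF finite_L L_ne]
  have e1: "Ex ?L (X a) = ?n / ?M" if "a \<in> ?V" for a using E1[OF that] assms(1) by simp
  have e2: "Ex ?L (\<lambda>g. X a g * X b g) = ?n / ?M * (?n - 1) / (?M - 1)" if "a \<in> ?V" "b \<in> ?V" "a \<noteq> b" for a b
    using E2[OF that] by simp
  have e11: "Ex ?L (\<lambda>g. X a g * X a g) = ?n / ?M" if "a \<in> ?V" for a
    using e1[OF that] by (simp add: XX)
  note e2ij = e2[OF assms(4,5,6)] and e2ji = e2[OF assms(5,4) assms(6)[symmetric]]
  note e1i = e1[OF assms(4)] and e1j = e1[OF assms(5)] and e11i = e11[OF assms(4)] and e11j = e11[OF assms(5)]
  show ?thesis
  proof (cases "k = i")
    case True
    have "Ex ?L (\<lambda>g. X k g * (X i g * X j g)) = Ex ?L (\<lambda>g. X i g * X j g)"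
      using True by (intro Ex_cong) (simp add: XX mult.assoc[symmetric])
    then show ?thesis
      using True A1[OF nz refl refl, of ?n]
      by (simp only: CA p e1i e1j e2ij e11i)
  next
    case ki: False
    show ?thesis
    proof (cases "k = j")
      case True
      have "Ex ?L (\<lambda>g. X k g * (X i g * X j g)) = Ex ?L (\<lambda>g. X i g * X j g)"
        using True by (intro Ex_cong) (metis XX mult.assoc mult.commute)
      then show ?thesis
        using True A1[OF nz refl refl, of ?n]
        by (simp only: CA p e1i e1j e2ij e2ji e11j) (simp add: algebra_simps)
    next
      case kj: False
      have "Ex ?L (\<lambda>g. X k g * (X i g * X j g)) = Ex ?L (\<lambda>g. X i g * X j g * X k g)"
        by (intro Ex_cong) (simp add: mult_ac)
      also have "\<dots> = ?n / ?M * (?n - 1) / (?M - 1) * (?n - 2) / (?M - 2)"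
        using E3[OF assms(4,5,3,6) ki kj] by simp
      finally show ?thesis
        using A3[OF nz refl refl, of ?n] e1[OF assms(3)]
          e2[OF assms(3,4) ki] e2[OF assms(3,5) kj]
        by (simp only: CA p e1i e1j e2ij)
    qed
  qed
qed


theorem theorem1:
  fixes n1 n2 N :: nat and E :: "nat set set" and w :: "nat set \<Rightarrow> real"
  assumes "n1 \<ge> 2" and "n2 \<ge> 2" and "N = n1 + n2" and "N \<ge> 4"
    and "E \<subseteq> {{i, j} | i j. i \<in> {1..N} \<and> j \<in> {1..N} \<and> i \<noteq> j}"
  defines "L \<equiv> labelings n1 n2"
    and "R1 \<equiv> Rw E w 0" and "R2 \<equiv> Rw E w 1"
  defines "Sig \<equiv> (vector [vector [Var L R1, Cov L R1 R2], vector [Cov L R2 R1, Var L R2]]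
                    :: real^2^2)"
  assumes "invertible Sig"
  defines "SR \<equiv> (\<lambda>g. let d = (vector [R1 g - Ex L R1, R2 g - Ex L R2] :: real^2)
                       in d \<bullet> (matrix_inv Sig *v d))"
    and "p \<equiv> real (n1 - 1) / real (N - 2)"
  defines "q \<equiv> 1 - p"
  defines "Zdiff \<equiv> (\<lambda>g. ((R1 g - R2 g) - Ex L (\<lambda>h. R1 h - R2 h))
                         / sqrt (Var L (\<lambda>h. R1 h - R2 h)))"
    and "Zw \<equiv> (\<lambda>g. ((q * R1 g + p * R2 g) - Ex L (\<lambda>h. q * R1 h + p * R2 h))
                         / sqrt (Var L (\<lambda>h. q * R1 h + p * R2 h)))"
  shows "(\<forall>g\<in>L. SR g = (Zdiff g)^2 + (Zw g)^2) \<and> Cov L Zdiff Zw = 0"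
proof -
  let ?V = "{1..n1+n2}"
  have fin: "finite L" and ne: "L \<noteq> {}" using finite_L L_ne by (simp_all add: L_def)
  have Ep: "\<exists>i j. e = {i,j} \<and> i \<in> ?V \<and> j \<in> ?V \<and> i \<noteq> j" if "e \<in> E" for e
    using assms(5) assms(3) that by blast
  have finE: "finite E"
    by (rule finite_subset[of _ "Pow {1..N}"]) (use assms(5) in auto)
  have gV: "g i \<in> {0,1}" if "g \<in> L" "i \<in> ?V" for g i
    using that by (auto simp: L_def labelings_def PiE_iff)
  define Xs where "Xs (e::nat set) (g::nat\<Rightarrow>nat) = (\<Sum>k\<in>e. X k g)" for e g
  define P where "P (e::nat set) (g::nat\<Rightarrow>nat) = (of_bool (\<forall>i\<in>e. g i = (0::nat)) :: real)" for e g
  define D where "D (g::nat\<Rightarrow>nat) = (\<Sum>e\<in>E. w e * Xs e g)" for g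
  define W where "W = (\<Sum>e\<in>E. w e)"
  have R1e: "R1 = (\<lambda>g. \<Sum>e\<in>E. w e * P e g)" unfolding R1_def Rw_def P_def by auto
  have PX: "P e = (\<lambda>g. X i g * X j g)" if "e = {i,j}" for e i j
    using that by (auto simp: P_def X_def)
  have XsX: "Xs e = (\<lambda>g. X i g + X j g)" if "e = {i,j}" "i \<noteq> j" for e i j
    using that by (auto simp: Xs_def)
  have R2e: "R2 g = W - D g + R1 g" if g: "g \<in> L" for g
  proof -
    have "R2 g = (\<Sum>e\<in>E. w e - w e * Xs e g + w e * P e g)"
      unfolding R2_def Rw_def
    proof (rule sum.cong[OF refl])
      fix e assume e: "e \<in> E"
      then obtain i j where ij: "e = {i,j}" "i \<in> ?V" "j \<in> ?V" "i \<noteq> j" using Ep by blast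
      have "g i \<in> {0,1}" "g j \<in> {0,1}" using gV[OF g] ij by auto
      then show "w e * of_bool (\<forall>i\<in>e. g i = 1) = w e - w e * Xs e g + w e * P e g"
        using ij by (auto simp: Xs_def P_def X_def)
    qed
    then show ?thesis
      by (simp add: sum.distrib sum_subtractf W_def D_def R1e)
  qed
  have KD: "Cov L D h = (\<Sum>e\<in>E. w e * (\<Sum>k\<in>e. Cov L (X k) h))" for h
    unfolding D_def Xs_def by (simp add: Cov_sum1[OF fin ne] Cov_sum1'[OF fin ne])
  have pdef: "p = real (n1-1) / real (n1+n2-2)" using p_def assms(3) by simp
  have key1: "Cov L D (P e') = p * Cov L D (Xs e')" if e': "e' \<in> E" for e'
  proof -
    obtain i j where ij: "e' = {i,j}" "i \<in> ?V" "j \<in> ?V" "i \<noteq> j" using Ep[OF e'] by blast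
    have CX: "Cov L (X k) (Xs e') = Cov L (X k) (X i) + Cov L (X k) (X j)" for k
      unfolding Xs_def Cov_sum2'[OF fin ne] using ij by simp
    have "Cov L D (P e') = (\<Sum>e\<in>E. w e * (\<Sum>k\<in>e. p * Cov L (X k) (Xs e')))"
      unfolding KD
    proof (rule sum.cong[OF refl])
      fix e assume e: "e \<in> E"
      obtain a b where ab: "e = {a,b}" "a \<in> ?V" "b \<in> ?V" "a \<noteq> b" using Ep[OF e] by blast
      have "Cov L (X k) (P e') = p * Cov L (X k) (Xs e')" if "k \<in> e" for k
      proof -
        have k: "k \<in> ?V" using that ab by auto
        show ?thesis unfolding CX PX[OF ij(1)] unfolding L_def pdef
          by (rule K[OF assms(1,2) k ij(2,3,4)])
      qed
      then show "w e * (\<Sum>k\<in>e. Cov L (X k) (P e')) = w e * (\<Sum>k\<in>e. p * Cov L (X k) (Xs e'))"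
        by simp
    qed
    also have "\<dots> = p * Cov L D (Xs e')"
      unfolding KD by (simp add: sum_distrib_left mult_ac)
    finally show ?thesis .
  qed
  have key2: "Cov L D R1 = p * Cov L D D"
  proof -
    have "Cov L D R1 = (\<Sum>e\<in>E. w e * Cov L D (P e))"
      unfolding R1e by (rule Cov_sum2[OF fin ne])
    also have "\<dots> = (\<Sum>e\<in>E. w e * (p * Cov L D (Xs e)))"
      by (rule sum.cong[OF refl]) (simp add: key1)
    also have "\<dots> = p * (\<Sum>e\<in>E. w e * Cov L D (Xs e))"
      by (simp add: sum_distrib_left mult_ac)
    also have "(\<Sum>e\<in>E. w e * Cov L D (Xs e)) = Cov L D D"
      by (subst (2) D_def[abs_def]) (simp add: Cov_sum2[OF fin ne])
    finally show ?thesis .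
  qed
  have qp: "q = 1 - p" by (simp add: q_def)
  have key3: "Cov L (\<lambda>h. R1 h - R2 h) (\<lambda>h. q * R1 h + p * R2 h) = 0"
  proof -
    have "Cov L (\<lambda>h. R1 h - R2 h) (\<lambda>h. q * R1 h + p * R2 h)
        = Cov L (\<lambda>h. 1 * D h + 0 * D h + (- W)) (\<lambda>h. 1 * R1 h + (- p) * D h + p * W)"
      by (rule Cov_cong) (simp_all add: R2e qp algebra_simps)
    also have "\<dots> = Cov L D R1 - p * Cov L D D"
      unfolding Cov_lin[OF fin ne] by simp
    finally show ?thesis using key2 by simp
  qed
  define V1 where "V1 = Cov L R1 R1"
  define V2 where "V2 = Cov L R2 R2"
  define C where "C = Cov L R1 R2"
  have C': "Cov L R2 R1 = C" unfolding C_def by (rule Cov_comm)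
  have lin: "Cov L (\<lambda>h. a1*R1 h + b1*R2 h + c1) (\<lambda>h. a2*R1 h + b2*R2 h + c2)
      = a1*a2*V1 + a1*b2*C + b1*a2*C + b1*b2*V2" for a1 b1 c1 a2 b2 c2
    by (simp add: Cov_lin[OF fin ne] V1_def V2_def C_def C')
  have fU: "(\<lambda>h. R1 h - R2 h) = (\<lambda>h. 1*R1 h + (-1)*R2 h + 0)" by simp
  have fW: "(\<lambda>h. q*R1 h + p*R2 h) = (\<lambda>h. q*R1 h + p*R2 h + 0)" by simp
  define VU where "VU = Var L (\<lambda>h. R1 h - R2 h)"
  define VW where "VW = Var L (\<lambda>h. q*R1 h + p*R2 h)"
  have VUe: "VU = V1 - 2*C + V2" unfolding VU_def Var_Cov fU lin by simp
  have VWe: "VW = q*q*V1 + 2*p*q*C + p*p*V2" unfolding VW_def Var_Cov fW lin by (simp add: algebra_simps)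
  have rel: "q*V1 + p*C - q*C - p*V2 = 0" using key3 unfolding fU fW lin by (simp add: algebra_simps)
  have detS: "det Sig = V1*V2 - C*C"
    by (simp add: det_2 Sig_def Var_Cov V1_def V2_def C_def C')
  have detnz: "det Sig \<noteq> 0" using \<open>invertible Sig\<close> invertible_det_nz by blast
  have prod: "VU * VW = V1*V2 - C*C" by (rule det_alg[OF qp rel VUe VWe])
  have Vnn: "Var L f \<ge> 0" for f :: "(nat \<Rightarrow> nat) \<Rightarrow> real"
    by (simp add: Var_def Ex_def sum_nonneg divide_nonneg_nonneg)
  have VUnz: "VU \<noteq> 0" and VWnz: "VW \<noteq> 0" using prod detS detnz by auto
  have VUpos: "VU > 0" using VUnz Vnn[of "\<lambda>h. R1 h - R2 h"] unfolding VU_def by linarith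
  have VWpos: "VW > 0" using VWnz Vnn[of "\<lambda>h. q*R1 h + p*R2 h"] unfolding VW_def by linarith
  define sU where "sU = sqrt VU"
  define sW where "sW = sqrt VW"
  have sUpos: "sU > 0" and sWpos: "sW > 0" using VUpos VWpos by (simp_all add: sU_def sW_def)
  define EU where "EU = Ex L (\<lambda>h. R1 h - R2 h)"
  define EW where "EW = Ex L (\<lambda>h. q * R1 h + p * R2 h)"
  have EUe: "EU = Ex L R1 - Ex L R2"
    unfolding EU_def by (simp add: Ex_def sum_subtractf diff_divide_distrib)
  have EWe: "EW = q * Ex L R1 + p * Ex L R2"
    unfolding EW_def by (simp add: Ex_add Ex_cmult)
  have Zd: "Zdiff = (\<lambda>x. (1/sU) * R1 x + (-1/sU) * R2 x + (- EU/sU))"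
    using sUpos by (auto simp: Zdiff_def sU_def VU_def EU_def field_simps)
  have Zw': "Zw = (\<lambda>x. (q/sW) * R1 x + (p/sW) * R2 x + (- EW/sW))"
    using sWpos by (auto simp: Zw_def sW_def VW_def EW_def field_simps)
  have part2: "Cov L Zdiff Zw = 0"
  proof -
    have "Cov L Zdiff Zw = (q*V1 + p*C - q*C - p*V2) / (sU * sW)"
      unfolding Zd Zw' lin using sUpos sWpos by (simp add: field_simps)
    then show ?thesis using rel by simp
  qed
  have part1: "SR g = (Zdiff g)^2 + (Zw g)^2" if g: "g \<in> L" for g
  proof -
    define a where "a = R1 g - Ex L R1"
    define b where "b = R2 g - Ex L R2"
    define d where "d = (vector [a, b] :: real^2)"
    define y where "y = matrix_inv Sig *v d"
    have ex: "\<exists>A'. Sig ** A' = mat 1 \<and> A' ** Sig = mat 1"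
      using \<open>invertible Sig\<close> unfolding invertible_def by blast
    have inv: "Sig ** matrix_inv Sig = mat 1"
      using someI_ex[OF ex] unfolding matrix_inv_def by blast
    have Sy: "Sig *v y = d" unfolding y_def matrix_vector_mul_assoc inv by simp
    have c1: "V1 * y$1 + C * y$2 = a"
    proof -
      have "(Sig *v y)$1 = a" using Sy by (simp add: d_def)
      then show ?thesis by (simp add: matrix_vector_mult_def sum_2 Sig_def Var_Cov V1_def C_def)
    qed
    have c2: "C * y$1 + V2 * y$2 = b"
    proof -
      have "(Sig *v y)$2 = b" using Sy by (simp add: d_def)
      then show ?thesis by (simp add: matrix_vector_mult_def sum_2 Sig_def Var_Cov V2_def C')
    qed
    have SRg: "SR g = a * y$1 + b * y$2"
      unfolding SR_def Let_def by (simp add: a_def b_def y_def d_def inner_vec_def sum_2)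
    have z1: "(Zdiff g)^2 = (a-b)^2/VU"
    proof -
      have "Zdiff g = (a - b) / sU"
        unfolding Zdiff_def sU_def VU_def EU_def[symmetric] EUe a_def b_def by simp
      then show ?thesis using VUpos by (simp add: power_divide sU_def)
    qed
    have z2: "(Zw g)^2 = (q*a+p*b)^2/VW"
    proof -
      have "Zw g = (q*a + p*b) / sW"
        unfolding Zw_def sW_def VW_def EW_def[symmetric] EWe a_def b_def by (simp add: algebra_simps)
      then show ?thesis using VWpos by (simp add: power_divide sW_def)
    qed
    show ?thesis unfolding SRg z1 z2
      by (rule final_alg[OF c1 c2 qp rel VUe VWe VUnz VWnz])
  qed
  show ?thesis using part1 part2 by blast
qed

end
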